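(* Let $(\lambda_n)_{n\in\mathbb{N}_0}$ be real numbers with $\limsup_{n\to\infty}|\lambda_n|/n\le\beta$ for some $\beta>0$. Let $\gamma>0$, $f\in C^\infty[x_0,x_0+\gamma]$, and suppose there are constants $C>0$, $\sigma>0$ with $|D^{(2n)}f(t)|\le C(2n)!\sigma^{2n}$ for all $t\in[x_0,x_0+\gamma]$ and all $n\in\mathbb{N}_0$. Then for every $\varepsilon>0$ there exist constants $C_2>0$ and $\delta\in(0,\gamma)$ such that $$|D^{(2n+1)}f(t)|\le C_2(2n+1)!(\sigma+\varepsilon)^{2n+1}$$ for all $t\in[x_0,x_0+\delta]$ and all $n\in\mathbb{N}_0$.
   Context: For a sequence $(\lambda_n)$ and a smooth function $f$, $D^{(n)}f=(\frac{d}{dt}-\lambda_0)\cdots(\frac{d}{dt}-\lambda_{n-1})f$ with $D^{(0)}f=f$ (one-sided derivatives at endpoints). $f$ may be complex-valued. *)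

theory Defs
  imports "HOL-Analysis.Analysis"
begin

fun higher_deriv_on :: "real \<Rightarrow> real \<Rightarrow> nat \<Rightarrow> (real \<Rightarrow> complex) \<Rightarrow> real \<Rightarrow> complex" where
  "higher_deriv_on a b 0 f = f"
| "higher_deriv_on a b (Suc k) f =
     (\<lambda>t. vector_derivative (higher_deriv_on a b k f) (at t within {a..b}))"

definition smooth_on_interval :: "real \<Rightarrow> real \<Rightarrow> (real \<Rightarrow> complex) \<Rightarrow> bool" where
  "smooth_on_interval a b f \<longleftrightarrow>
     (\<forall>k. \<forall>t\<in>{a..b}. (higher_deriv_on a b k f has_vector_derivative
                         higher_deriv_on a b (Suc k) f t) (at t within {a..b}))"

text \<open>D^(n) f = (d/dt - lam 0) ... (d/dt - lam (n-1)) f on [a,b]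
  (constant coefficients, so the factors commute).\<close>
fun Dop :: "(nat \<Rightarrow> real) \<Rightarrow> real \<Rightarrow> real \<Rightarrow> nat \<Rightarrow> (real \<Rightarrow> complex) \<Rightarrow> real \<Rightarrow> complex" where
  "Dop lam a b 0 f = f"
| "Dop lam a b (Suc n) f =
     (\<lambda>t. vector_derivative (Dop lam a b n f) (at t within {a..b})
          - complex_of_real (lam n) * Dop lam a b n f t)"

end

theory Submission imports Defs begin

lemma vmvt:
  fixes F :: "real \<Rightarrow> complex"
  assumes d: "\<And>x. x \<in> {s..r} \<Longrightarrow> (F has_vector_derivative F' x) (at x within {s..r})"
    and b: "\<And>x. x \<in> {s..r} \<Longrightarrow> norm (F' x) \<le> B"
    and sr: "s \<le> r"
  shows "norm (F r - F s) \<le> B * (r - s)"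
proof -
  have "norm (F r - F s) \<le> B * norm (r - s)"
  proof (rule differentiable_bound[of "{s..r}" F "\<lambda>x h. h *\<^sub>R F' x"])
    show "convex {s..r}" by simp
    show "(F has_derivative (\<lambda>h. h *\<^sub>R F' x)) (at x within {s..r})" if "x \<in> {s..r}" for x
      using d[OF that] by (simp add: has_vector_derivative_def)
    show "onorm (\<lambda>h. h *\<^sub>R F' x) \<le> B" if "x \<in> {s..r}" for x
      by (rule onorm_le) (use b[OF that] in \<open>auto, metis abs_ge_zero mult.commute mult_left_mono\<close>)
  qed (use sr in auto)
  then show ?thesis using sr by simp
qed

lemma key:
  fixes g h k :: "real \<Rightarrow> complex" and a b L M0 M2 t l :: real
  assumes l: "l > 0" and L: "L \<ge> 0" "l * L \<le> 1/4"
    and ab: "\<bar>a\<bar> \<le> L" "\<bar>b\<bar> \<le> L"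
    and dg: "\<And>u. u \<in> {t..t+l} \<Longrightarrow> (g has_vector_derivative (h u + of_real a * g u)) (at u within {t..t+l})"
    and dh: "\<And>u. u \<in> {t..t+l} \<Longrightarrow> (h has_vector_derivative (k u + of_real b * h u)) (at u within {t..t+l})"
    and bg: "\<And>u. u \<in> {t..t+l} \<Longrightarrow> norm (g u) \<le> M0"
    and bk: "\<And>u. u \<in> {t..t+l} \<Longrightarrow> norm (k u) \<le> M2"
  shows "norm (h t) \<le> 4 * M0 / l + 2 * L * M0 + 3 * l * M2"
proof -
  let ?W = "{t..t+l}"
  have tW: "t \<in> ?W" using l by simp
  have M0: "M0 \<ge> 0" using bg[OF tW] norm_ge_zero[of "g t"] by linarith
  have M2: "M2 \<ge> 0" using bk[OF tW] norm_ge_zero[of "k t"] by linarith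
  have "continuous_on ?W h"
    unfolding continuous_on_eq_continuous_within
    using dh has_vector_derivative_continuous by blast
  then have "continuous_on ?W (\<lambda>u. norm (h u))" by (intro continuous_intros)
  then obtain us where us: "us \<in> ?W" and usmax: "\<And>u. u \<in> ?W \<Longrightarrow> norm (h u) \<le> norm (h us)"
    using continuous_attains_sup[of ?W "\<lambda>u. norm (h u)"] l by auto
  define H where "H = norm (h us)"
  have H0: "H \<ge> 0" by (simp add: H_def)
  have bh': "norm (k u + of_real b * h u) \<le> L * H + M2" if "u \<in> ?W" for u
  proof -
    have "norm (k u + of_real b * h u) \<le> norm (k u) + \<bar>b\<bar> * norm (h u)"
      by (metis norm_mult norm_of_real norm_triangle_ineq)
    also have "\<dots> \<le> M2 + L * H"
      using bk[OF that] ab usmax[OF that] H0 unfolding H_def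
      by (intro add_mono mult_mono) auto
    finally show ?thesis by simp
  qed
  have hdiff: "norm (h u - h t) \<le> (L * H + M2) * l" if "u \<in> ?W" for u
  proof -
    have "norm (h u - h t) \<le> (L * H + M2) * (u - t)"
      by (rule vmvt[of t u h "\<lambda>u. k u + of_real b * h u"])
         (use that in \<open>auto intro: has_vector_derivative_within_subset[OF dh] bh'\<close>)
    also have "\<dots> \<le> (L * H + M2) * l"
      using that L H0 M2 by (intro mult_left_mono) auto
    finally show ?thesis .
  qed
  have "H \<le> norm (h t) + (L * H + M2) * l"
    using hdiff[OF us] norm_triangle_ineq2[of "h us" "h t"] unfolding H_def by linarith
  then have "H \<le> norm (h t) + L * H * l + l * M2" by (simp add: algebra_simps)
  moreover have "L * H * l \<le> H / 4"
    using mult_right_mono[OF L(2) H0] by (simp add: mult.commute mult.left_commute)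
  moreover have "l * M2 \<ge> 0" using M2 l by simp
  ultimately have H0': "H \<le> 2 * norm (h t) + 2 * (l * M2)"
    using norm_ge_zero[of "h t"] by linarith
  then have H: "H \<le> 2 * norm (h t) + 2 * l * M2" by (simp add: mult.assoc)
  define phi where "phi u = g u - of_real (u - t) * h t" for u
  have dphi: "(phi has_vector_derivative (h u + of_real a * g u - h t)) (at u within {t..t+l})"
    if "u \<in> ?W" for u
    unfolding phi_def
    by (rule derivative_eq_intros dg[OF that] refl)+ simp
  have bphi: "norm (h u + of_real a * g u - h t) \<le> (L * H + M2) * l + L * M0" if "u \<in> ?W" for u
  proof -
    have "norm (h u + of_real a * g u - h t) \<le> norm (h u - h t) + \<bar>a\<bar> * norm (g u)"
      by (metis add.commute add_diff_eq norm_mult norm_of_real norm_triangle_ineq diff_add_eq)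
    also have "\<dots> \<le> (L * H + M2) * l + L * M0"
      using hdiff[OF that] ab bg[OF that] M0 by (intro add_mono mult_mono) auto
    finally show ?thesis .
  qed
  have "norm (phi (t+l) - phi t) \<le> ((L * H + M2) * l + L * M0) * (t + l - t)"
    by (rule vmvt[of t "t+l" phi]) (use dphi bphi l in auto)
  moreover have "phi (t+l) - phi t = g (t+l) - g t - of_real l * h t"
    by (simp add: phi_def)
  ultimately have 1: "norm (g (t+l) - g t - of_real l * h t) \<le> ((L * H + M2) * l + L * M0) * l"
    by simp
  have "l * norm (h t) = norm (of_real l * h t)" using l by (simp add: norm_mult)
  also have "\<dots> = norm ((g (t+l) - g t) - (g (t+l) - g t - of_real l * h t))" by simp
  also have "\<dots> \<le> norm (g (t+l) - g t) + norm (g (t+l) - g t - of_real l * h t)"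
    by (rule norm_triangle_ineq4)
  also have "\<dots> \<le> norm (g (t+l)) + norm (g t) + norm (g (t+l) - g t - of_real l * h t)"
    using norm_triangle_ineq4[of "g (t+l)" "g t"] by simp
  also have "\<dots> \<le> M0 + M0 + ((L * H + M2) * l + L * M0) * l"
    using bg[of "t+l"] bg[of t] l 1 by (intro add_mono) auto
  finally have 2: "l * norm (h t) \<le> 2 * M0 + l * l * L * H + l * l * M2 + l * L * M0"
    by (simp add: algebra_simps)
  have "l * l * L * H \<le> l * ((1/4) * (2 * norm (h t) + 2 * l * M2))"
    using mult_mono[OF L(2) H] l H0 by (simp add: mult.assoc mult_left_mono)
  with 2 have "l * norm (h t) \<le> l * (2 * M0 / l + (1/2) * norm (h t) + (3/2) * l * M2 + L * M0)"
    using l by (simp add: algebra_simps)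
  then have "norm (h t) \<le> 2 * M0 / l + (1/2) * norm (h t) + (3/2) * l * M2 + L * M0"
    using l by simp
  then show ?thesis by (simp add: field_simps)
qed


lemma hd_shift: "higher_deriv_on a b (Suc m) g = higher_deriv_on a b m (higher_deriv_on a b (Suc 0) g)"
  by (induction m) simp_all

lemma smooth_hd1:
  assumes "smooth_on_interval a b g"
  shows "smooth_on_interval a b (higher_deriv_on a b (Suc 0) g)"
proof -
  have e: "\<And>k. higher_deriv_on a b k (higher_deriv_on a b (Suc 0) g) = higher_deriv_on a b (Suc k) g"
    by (rule hd_shift[symmetric])
  show ?thesis unfolding smooth_on_interval_def e
    using assms unfolding smooth_on_interval_def by blast
qed

lemma lin_eq:
  assumes ab: "a < b" and s1: "smooth_on_interval a b g1" and s2: "smooth_on_interval a b g2"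
  shows "t \<in> {a..b} \<Longrightarrow> higher_deriv_on a b k (\<lambda>s. g1 s - c * g2 s) t
           = higher_deriv_on a b k g1 t - c * higher_deriv_on a b k g2 t"
proof (induction k arbitrary: t)
  case 0
  then show ?case by simp
next
  case (Suc k)
  have D: "((\<lambda>s. higher_deriv_on a b k g1 s - c * higher_deriv_on a b k g2 s) has_vector_derivative
      (higher_deriv_on a b (Suc k) g1 t - c * higher_deriv_on a b (Suc k) g2 t)) (at t within {a..b})"
    using s1 s2 Suc.prems unfolding smooth_on_interval_def
    by (intro derivative_intros) auto
  have "(higher_deriv_on a b k (\<lambda>s. g1 s - c * g2 s) has_vector_derivative
      (higher_deriv_on a b (Suc k) g1 t - c * higher_deriv_on a b (Suc k) g2 t)) (at t within {a..b})"
    by (rule has_vector_derivative_transform[OF Suc.prems _ D]) (rule Suc.IH)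
  then have "vector_derivative (higher_deriv_on a b k (\<lambda>s. g1 s - c * g2 s)) (at t within {a..b})
     = higher_deriv_on a b (Suc k) g1 t - c * higher_deriv_on a b (Suc k) g2 t"
    by (rule vector_derivative_within_closed_interval[OF ab Suc.prems])
  then show ?case by simp
qed

lemma smooth_lin:
  assumes ab: "a < b" and s1: "smooth_on_interval a b g1" and s2: "smooth_on_interval a b g2"
  shows "smooth_on_interval a b (\<lambda>s. g1 s - c * g2 s)"
  unfolding smooth_on_interval_def
proof (intro allI ballI)
  fix k t assume t: "t \<in> {a..b}"
  have D: "((\<lambda>s. higher_deriv_on a b k g1 s - c * higher_deriv_on a b k g2 s) has_vector_derivative
      (higher_deriv_on a b (Suc k) g1 t - c * higher_deriv_on a b (Suc k) g2 t)) (at t within {a..b})"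
    using s1 s2 t unfolding smooth_on_interval_def
    by (intro derivative_intros) auto
  have "(higher_deriv_on a b k (\<lambda>s. g1 s - c * g2 s) has_vector_derivative
      (higher_deriv_on a b (Suc k) g1 t - c * higher_deriv_on a b (Suc k) g2 t)) (at t within {a..b})"
    by (rule has_vector_derivative_transform[OF t _ D]) (rule lin_eq[OF ab s1 s2])
  then show "(higher_deriv_on a b k (\<lambda>s. g1 s - c * g2 s) has_vector_derivative
      higher_deriv_on a b (Suc k) (\<lambda>s. g1 s - c * g2 s) t) (at t within {a..b})"
    using lin_eq[OF ab s1 s2 t, of "Suc k" c] by simp
qed

lemma Dop_smooth:
  assumes ab: "a < b" and sf: "smooth_on_interval a b f"
  shows "smooth_on_interval a b (Dop lam a b n f)"
proof (induction n)
  case 0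
  then show ?case using sf by simp
next
  case (Suc n)
  have e: "Dop lam a b (Suc n) f = (\<lambda>t. higher_deriv_on a b (Suc 0) (Dop lam a b n f) t
        - complex_of_real (lam n) * Dop lam a b n f t)" by simp
  show ?case unfolding e by (rule smooth_lin[OF ab smooth_hd1[OF Suc.IH] Suc.IH])
qed

lemma Dop_deriv:
  assumes ab: "a < b" and sf: "smooth_on_interval a b f" and t: "t \<in> {a..b}"
  shows "(Dop lam a b n f has_vector_derivative
           (Dop lam a b (Suc n) f t + complex_of_real (lam n) * Dop lam a b n f t)) (at t within {a..b})"
proof -
  have "(Dop lam a b n f has_vector_derivative vector_derivative (Dop lam a b n f) (at t within {a..b})) (at t within {a..b})"
    using Dop_smooth[OF ab sf, of lam n] t unfolding smooth_on_interval_def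
    by (metis higher_deriv_on.simps(1) higher_deriv_on.simps(2))
  then show ?thesis by simp
qed

lemma arith:
  fixes M0 M2 F l L K \<sigma> \<gamma> m :: real
  assumes m: "m \<ge> 1" and s: "\<sigma> > 0" and g: "\<gamma> > 0" and K: "K > 0" and F: "F \<ge> 0"
    and e0: "M0 * (m * \<sigma>) = F" and e2: "M2 = F * (\<sigma> * (m + 1))" and eL: "L = K * (m + 1)"
    and l: "l > 0" and l1: "l * (2 / \<gamma> + 4 * L + \<sigma> * (m + 1)) \<ge> 1"
    and l2: "l \<le> 1 / (\<sigma> * (m + 1))"
  shows "4 * M0 / l + 2 * L * M0 + 3 * l * M2 \<le> F * (8 / (\<gamma> * \<sigma>) + 36 * K / \<sigma> + 11)"
proof -
  define P where "P = F / \<sigma>"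
  have mM0: "m * M0 = P" using e0 s unfolding P_def by (simp add: field_simps)
  have "M0 = F / (m * \<sigma>)" using e0 m s by (simp add: field_simps)
  then have M0: "M0 \<ge> 0" using F m s by simp
  have M0P: "M0 \<le> P" using mult_right_mono[OF m M0] mM0 by simp
  have m1M0: "(m + 1) * M0 \<le> 2 * P" using mM0 M0P by (simp add: distrib_right)
  have P0: "P \<ge> 0" using M0 M0P by linarith
  have il: "1 / l \<le> 2 / \<gamma> + 4 * L + \<sigma> * (m + 1)" using l l1 by (simp add: divide_le_eq mult.commute)
  have t1: "4 * M0 / l \<le> 4 * M0 * (2 / \<gamma> + 4 * L + \<sigma> * (m + 1))"
    using mult_left_mono[OF il, of "4 * M0"] M0 by simp
  have "4 * M0 * (2 / \<gamma> + 4 * L + \<sigma> * (m + 1)) = 8 * M0 / \<gamma> + 16 * K * ((m + 1) * M0) + 4 * \<sigma> * ((m + 1) * M0)"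
    using eL by (simp add: algebra_simps)
  also have "\<dots> \<le> 8 * P / \<gamma> + 16 * K * (2 * P) + 4 * \<sigma> * (2 * P)"
    using M0P m1M0 g K s by (intro add_mono mult_left_mono divide_right_mono) auto
  finally have t1': "4 * M0 / l \<le> 8 * P / \<gamma> + 32 * K * P + 8 * \<sigma> * P" using t1 by simp
  have t2: "2 * L * M0 \<le> 4 * K * P"
    using mult_left_mono[OF m1M0, of "2 * K"] K eL by (simp add: algebra_simps)
  have t3: "l * M2 \<le> F"
  proof -
    have "l * M2 \<le> 1 / (\<sigma> * (m + 1)) * M2"
      using l2 e2 F s m by (intro mult_right_mono) auto
    also have "\<dots> = F"
    proof -
      have pos: "\<sigma> * (m + 1) \<noteq> 0" using s m by simp
      show ?thesis unfolding e2 using pos by simp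
    qed
    finally show ?thesis .
  qed
  have sP: "\<sigma> * P = F" using s unfolding P_def by simp
  have "F * (8 / (\<gamma> * \<sigma>) + 36 * K / \<sigma> + 11) = 8 * P / \<gamma> + 36 * K * P + 11 * F"
    using s g unfolding P_def by (simp add: field_simps)
  then show ?thesis using t1' t2 t3 sP by (simp add: algebra_simps) 
qed


lemma lam_bound:
  fixes lam :: "nat \<Rightarrow> real"
  assumes "limsup (\<lambda>n. ereal (\<bar>lam n\<bar> / real n)) \<le> ereal \<beta>" "\<beta> > 0"
  shows "\<exists>K>0. \<forall>m. \<bar>lam m\<bar> \<le> K * (real m + 1)"
proof -
  have "limsup (\<lambda>n. ereal (\<bar>lam n\<bar> / real n)) < ereal (\<beta> + 1)" using assms(1) by (simp add: le_less_trans)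
  then have "eventually (\<lambda>n. ereal (\<bar>lam n\<bar> / real n) < ereal (\<beta> + 1)) sequentially"
    by (rule Limsup_lessD)
  then obtain N where N: "\<And>n. n \<ge> N \<Longrightarrow> \<bar>lam n\<bar> / real n < \<beta> + 1"
    unfolding eventually_sequentially by auto
  define K where "K = \<beta> + 1 + (\<Sum>i\<le>N. \<bar>lam i\<bar>)"
  have S0: "(\<Sum>i\<le>N. \<bar>lam i\<bar>) \<ge> 0" by (simp add: sum_nonneg)
  have K: "K > 0" using assms(2) S0 unfolding K_def by linarith
  have "\<bar>lam m\<bar> \<le> K * (real m + 1)" for m
  proof (cases "m \<le> N")
    case True
    have "\<bar>lam m\<bar> \<le> (\<Sum>i\<le>N. \<bar>lam i\<bar>)"
      by (rule member_le_sum) (use True in auto)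
    also have "\<dots> \<le> K" unfolding K_def using assms(2) by simp
    also have "\<dots> \<le> K * (real m + 1)" using K by simp
    finally show ?thesis .
  next
    case False
    then have m: "real m > 0" by simp
    have "\<bar>lam m\<bar> < (\<beta> + 1) * real m" using N[of m] False m by (simp add: divide_less_eq)
    also have "\<dots> \<le> K * (real m + 1)"
      using S0 assms(2) unfolding K_def by (intro mult_mono) auto
    finally show ?thesis by simp
  qed
  then show ?thesis using K by blast
qed

theorem mainTheorem9:
  fixes lam :: "nat \<Rightarrow> real" and \<beta> \<gamma> x0 C \<sigma> :: real and f :: "real \<Rightarrow> complex"
  assumes "\<beta> > 0"
    and "limsup (\<lambda>n. ereal (\<bar>lam n\<bar> / real n)) \<le> ereal \<beta>"
    and "\<gamma> > 0"
    and "smooth_on_interval x0 (x0 + \<gamma>) f"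
    and "C > 0" and "\<sigma> > 0"
    and "\<And>n t. t \<in> {x0..x0 + \<gamma>} \<Longrightarrow>
           norm (Dop lam x0 (x0 + \<gamma>) (2 * n) f t) \<le> C * fact (2 * n) * \<sigma> ^ (2 * n)"
  shows "\<forall>\<epsilon>>0. \<exists>C2 \<delta>. C2 > 0 \<and> 0 < \<delta> \<and> \<delta> < \<gamma> \<and>
           (\<forall>n. \<forall>t\<in>{x0..x0 + \<delta>}.
              norm (Dop lam x0 (x0 + \<gamma>) (2 * n + 1) f t)
                \<le> C2 * fact (2 * n + 1) * (\<sigma> + \<epsilon>) ^ (2 * n + 1))"
proof (intro allI impI)
  fix \<epsilon> :: real assume \<epsilon>: "\<epsilon> > 0"
  note g = assms(3) and sf = assms(4) and C = assms(5) and s = assms(6) and bd = assms(7)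
  obtain K where K: "K > 0" and Kb: "\<And>m. \<bar>lam m\<bar> \<le> K * (real m + 1)"
    using lam_bound[OF assms(2) assms(1)] by blast
  let ?b = "x0 + \<gamma>"
  let ?I = "{x0..?b}"
  have ab: "x0 < ?b" using g by simp
  define C2 where "C2 = C * (8 / (\<gamma> * \<sigma>) + 36 * K / \<sigma> + 11)"
  have C2: "C2 > 0" unfolding C2_def using C g s K by (intro mult_pos_pos add_pos_pos) auto
  have main: "norm (Dop lam x0 ?b (2 * n + 1) f t) \<le> C2 * fact (2 * n + 1) * (\<sigma> + \<epsilon>) ^ (2 * n + 1)"
    if t: "t \<in> {x0..x0 + \<gamma>/2}" for n t
  proof -
    define m :: real where "m = real (2 * n + 1)"
    have m1: "m \<ge> 1" unfolding m_def by simp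
    define L where "L = K * (m + 1)"
    have L0: "L > 0" unfolding L_def using K m1 by simp
    define l where "l = min (\<gamma>/2) (min (1 / (4 * L)) (1 / (\<sigma> * (m + 1))))"
    have sm: "\<sigma> * (m + 1) > 0" using s m1 by simp
    have l0: "l > 0" unfolding l_def using g L0 sm by simp
    have lg: "l \<le> \<gamma>/2" unfolding l_def by simp
    have lL: "l * L \<le> 1/4"
    proof -
      have "l \<le> 1 / (4 * L)" unfolding l_def by simp
      then have "l * L \<le> 1 / (4 * L) * L" using L0 by (intro mult_right_mono) auto
      then show ?thesis using L0 by simp
    qed
    have l2: "l \<le> 1 / (\<sigma> * (m + 1))" unfolding l_def by simp
    have l1: "l * (2 / \<gamma> + 4 * L + \<sigma> * (m + 1)) \<ge> 1"
    proof -
      have nn: "l * (2 / \<gamma>) \<ge> 0" "l * (4 * L) \<ge> 0" "l * (\<sigma> * (m + 1)) \<ge> 0"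
        using l0 g L0 sm by auto
      have "l * (2 / \<gamma>) = 1 \<or> l * (4 * L) = 1 \<or> l * (\<sigma> * (m + 1)) = 1"
        unfolding l_def using g L0 sm by (auto simp: min_def)
      then show ?thesis using nn by (auto simp: distrib_left)
    qed
    have W: "{t..t+l} \<subseteq> ?I" using t lg by auto
    define M0 where "M0 = C * fact (2 * n) * \<sigma> ^ (2 * n)"
    define M2 where "M2 = C * fact (2 * Suc n) * \<sigma> ^ (2 * Suc n)"
    define F where "F = C * fact (2 * n + 1) * \<sigma> ^ (2 * n + 1)"
    have F0: "F \<ge> 0" unfolding F_def using C s by simp
    have f1: "(fact (2 * n + 1) :: real) = real (2 * n + 1) * fact (2 * n)"
      by (metis Suc_eq_plus1 fact_Suc)
    have p1: "\<sigma> ^ (2 * n + 1) = \<sigma> * \<sigma> ^ (2 * n)" by simp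
    have e0: "M0 * (m * \<sigma>) = F"
      unfolding M0_def F_def m_def f1 p1 by (simp only: mult_ac)
    have e2: "M2 = F * (\<sigma> * (m + 1))"
    proof -
      have eq: "2 * Suc n = Suc (2 * n + 1)" by simp
      have f2: "(fact (2 * Suc n) :: real) = real (Suc (2 * n + 1)) * fact (2 * n + 1)"
        unfolding eq by (rule fact_Suc)
      have p2: "\<sigma> ^ (2 * Suc n) = \<sigma> * \<sigma> ^ (2 * n + 1)" unfolding eq by simp
      have m2: "real (Suc (2 * n + 1)) = m + 1" unfolding m_def by simp
      show ?thesis unfolding M2_def F_def f2 p2 m2 by (simp only: mult_ac)
    qed
    have hb: "norm (Dop lam x0 ?b (2 * n + 1) f t) \<le> 4 * M0 / l + 2 * L * M0 + 3 * l * M2"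
    proof (rule key[where g = "Dop lam x0 ?b (2 * n) f" and k = "Dop lam x0 ?b (2 * Suc n) f"
          and a = "lam (2 * n)" and b = "lam (2 * n + 1)"])
      show "0 < l" "0 \<le> L" "l * L \<le> 1/4" using l0 L0 lL by auto
      have "K * (real (2 * n) + 1) \<le> K * (m + 1)" using K by (intro mult_left_mono) (auto simp: m_def)
      then show "\<bar>lam (2 * n)\<bar> \<le> L" using Kb[of "2 * n"] unfolding L_def by linarith
      show "\<bar>lam (2 * n + 1)\<bar> \<le> L" using Kb[of "2 * n + 1"] unfolding L_def m_def by simp
      fix u assume u: "u \<in> {t..t+l}"
      then have uI: "u \<in> ?I" using W by auto
      show "(Dop lam x0 ?b (2 * n) f has_vector_derivative
              Dop lam x0 ?b (2 * n + 1) f u + complex_of_real (lam (2 * n)) * Dop lam x0 ?b (2 * n) f u)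
             (at u within {t..t+l})"
        using has_vector_derivative_within_subset[OF Dop_deriv[OF ab sf uI, of lam "2 * n"] W] by simp
      show "(Dop lam x0 ?b (2 * n + 1) f has_vector_derivative
              Dop lam x0 ?b (2 * Suc n) f u + complex_of_real (lam (2 * n + 1)) * Dop lam x0 ?b (2 * n + 1) f u)
             (at u within {t..t+l})"
        using has_vector_derivative_within_subset[OF Dop_deriv[OF ab sf uI, of lam "2 * n + 1"] W] by simp
      show "norm (Dop lam x0 ?b (2 * n) f u) \<le> M0" unfolding M0_def by (rule bd[OF uI])
      show "norm (Dop lam x0 ?b (2 * Suc n) f u) \<le> M2" unfolding M2_def by (rule bd[OF uI])
    qed
    also have "\<dots> \<le> F * (8 / (\<gamma> * \<sigma>) + 36 * K / \<sigma> + 11)"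
      by (rule arith[OF m1 s g K F0 e0 e2 L_def l0 l1 l2])
    also have "\<dots> = C2 * fact (2 * n + 1) * \<sigma> ^ (2 * n + 1)"
      unfolding F_def C2_def by (simp add: algebra_simps)
    also have "\<dots> \<le> C2 * fact (2 * n + 1) * (\<sigma> + \<epsilon>) ^ (2 * n + 1)"
      using C2 s \<epsilon> by (intro mult_left_mono power_mono) auto
    finally show ?thesis .
  qed
  show "\<exists>C2 \<delta>. C2 > 0 \<and> 0 < \<delta> \<and> \<delta> < \<gamma> \<and>
           (\<forall>n. \<forall>t\<in>{x0..x0 + \<delta>}.
              norm (Dop lam x0 (x0 + \<gamma>) (2 * n + 1) f t)
                \<le> C2 * fact (2 * n + 1) * (\<sigma> + \<epsilon>) ^ (2 * n + 1))"
    using C2 g main by (intro exI[of _ C2] exI[of _ "\<gamma>/2"]) auto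
qed

end
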